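(* Let $Z$ be an extremal assignment of order $n$. For each $G\in S_2(n)$ with $Z(G)\neq\emptyset$, let $B_G$ be the set of labels of the leaves adjacent to the (unique) assigned vertex of $G$. Then $\mathcal{C}=\{B_G: G\in S_2(n),\ Z(G)\ne\emptyset\}$ is a contraction indicator.
   Context: $[n]=\{1,\dots,n\}$. A stable $n$-labeled tree is a finite tree with $n$ leaves labeled bijectively by $[n]$, all internal vertices of degree $\ge 3$; $V(G)$ its internal vertices; $S(n)$ the set of such trees up to label-preserving isomorphism and $S_2(n)$ those with exactly 2 internal vertices. $G\rightsquigarrow G'$: $G'$ obtained by collapsing connected sets of internal vertices, inducing surjection $\pi:V(G)\to V(G')$. An extremal assignment of order $n$: rule $Z(G)\subset V(G)$ for $G\in S(n)$ with (a) $Z(G)\ne V(G)$, (b) if $G\rightsquigarrow G'$ and $\pi^{-1}(v')=\{v_1,\dots,v_k\}$ then $v'\in Z(G')\iff v_1,\dots,v_k\in Z(G)$. A contraction indicator is a collection $\mathcal{C}$ of subsets of $[n]$ such that (1) $2\le|B|\le n-2$ for every $B\in\mathcal{C}$; (2) if $B\in\mathcal{C}$ and $B'\subset B$ with $|B'|\ge 2$ then $B'\in\mathcal{C}$; (3) $B_1\cup B_2\ne[n]$ for all $B_1,B_2\in\mathcal{C}$. *)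

theory Defs
  imports Main
begin

text \<open>Vertices of a labeled tree: leaves carry their label, internal vertices carry a name.\<close>
datatype node = Leaf nat | Inner nat

text \<open>A graph is given by its set of undirected edges (2-element sets of nodes);
its vertex set is the union of the edges.\<close>

definition adj :: "node set set \<Rightarrow> (node \<times> node) set" where
  "adj E = {(x, y). {x, y} \<in> E}"

definition deg :: "node set set \<Rightarrow> node \<Rightarrow> nat" where
  "deg E x = card {e \<in> E. x \<in> e}"

definition inner :: "node set set \<Rightarrow> nat set" where
  "inner E = {v. Inner v \<in> \<Union>E}"

definition connected_on :: "node set set \<Rightarrow> node set \<Rightarrow> bool" where
  "connected_on E S \<longleftrightarrow> (\<forall>x\<in>S. \<forall>y\<in>S. (x, y) \<in> (adj E \<inter> (S \<times> S))\<^sup>*)"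

definition is_tree :: "node set set \<Rightarrow> bool" where
  "is_tree E \<longleftrightarrow> finite E \<and> (\<forall>e\<in>E. card e = 2) \<and> connected_on E (\<Union>E)
      \<and> card E + 1 = card (\<Union>E)"

definition stable_tree :: "nat \<Rightarrow> node set set \<Rightarrow> bool" where
  "stable_tree n E \<longleftrightarrow> is_tree E \<and> {i. Leaf i \<in> \<Union>E} = {1..n}
      \<and> (\<forall>i\<in>{1..n}. deg E (Leaf i) = 1)
      \<and> (\<forall>v\<in>inner E. deg E (Inner v) \<ge> 3)"

fun lift :: "(nat \<Rightarrow> nat) \<Rightarrow> node \<Rightarrow> node" where
  "lift \<pi> (Leaf i) = Leaf i"
| "lift \<pi> (Inner v) = Inner (\<pi> v)"

definition contracts :: "nat \<Rightarrow> node set set \<Rightarrow> node set set \<Rightarrow> (nat \<Rightarrow> nat) \<Rightarrow> bool" where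
  "contracts n E E' \<pi> \<longleftrightarrow> stable_tree n E \<and> stable_tree n E'
     \<and> \<pi> ` inner E = inner E'
     \<and> (\<forall>v'\<in>inner E'. connected_on E (Inner ` {v \<in> inner E. \<pi> v = v'}))
     \<and> E' = {lift \<pi> ` e | e. e \<in> E \<and> card (lift \<pi> ` e) = 2}"

definition extremal_assignment :: "nat \<Rightarrow> (node set set \<Rightarrow> nat set) \<Rightarrow> bool" where
  "extremal_assignment n Z \<longleftrightarrow>
     (\<forall>E. stable_tree n E \<longrightarrow> Z E \<subseteq> inner E \<and> Z E \<noteq> inner E)
   \<and> (\<forall>E E' \<pi>. contracts n E E' \<pi> \<longrightarrow>
        (\<forall>v'\<in>inner E'. v' \<in> Z E' \<longleftrightarrow> (\<forall>v\<in>inner E. \<pi> v = v' \<longrightarrow> v \<in> Z E)))"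

definition contraction_indicator :: "nat \<Rightarrow> nat set set \<Rightarrow> bool" where
  "contraction_indicator n C \<longleftrightarrow>
     (\<forall>B\<in>C. B \<subseteq> {1..n} \<and> 2 \<le> card B \<and> card B \<le> n - 2)
   \<and> (\<forall>B\<in>C. \<forall>B'. B' \<subseteq> B \<and> 2 \<le> card B' \<longrightarrow> B' \<in> C)
   \<and> (\<forall>B1\<in>C. \<forall>B2\<in>C. B1 \<union> B2 \<noteq> {1..n})"

end

theory Submission
  imports Defs
begin

definition star :: "nat \<Rightarrow> nat set \<Rightarrow> node set set" where
  "star x B = (\<lambda>i. {Leaf i, Inner x}) ` B"

definition tree2 :: "nat set \<Rightarrow> nat set \<Rightarrow> nat \<Rightarrow> nat \<Rightarrow> node set set" where
  "tree2 B C x y = star x B \<union> star y C \<union> {{Inner x, Inner y}}"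

definition tree3 :: "nat set \<Rightarrow> nat set \<Rightarrow> nat set \<Rightarrow> nat \<Rightarrow> nat \<Rightarrow> nat \<Rightarrow> node set set" where
  "tree3 A M C a b c = star a A \<union> star b M \<union> star c C \<union> {{Inner a, Inner b}} \<union> {{Inner b, Inner c}}"

lemma mem_star: "e \<in> star x B \<longleftrightarrow> (\<exists>i\<in>B. e = {Leaf i, Inner x})"
  unfolding star_def by auto

lemma in_star[simp]: "i \<in> B \<Longrightarrow> {Leaf i, Inner x} \<in> star x B"
  "i \<in> B \<Longrightarrow> {Inner x, Leaf i} \<in> star x B"
  unfolding star_def by (auto simp: insert_commute)

lemma filt_II_L[simp]: "{e. e = {Inner a, Inner b} \<and> Leaf i \<in> e} = {}" by auto
lemma filt_II_I[simp]: "{e. e = {Inner a, Inner b} \<and> Inner u \<in> e} = (if u = a \<or> u = b then {{Inner a, Inner b}} else {})" by auto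

lemma adj_iff: "(p, q) \<in> adj E \<longleftrightarrow> {p, q} \<in> E"
  unfolding adj_def by auto

lemma card_star[simp]: "card (star x B) = card B"
  unfolding star_def by (rule card_image) (auto simp: inj_on_def doubleton_eq_iff)

lemma finite_star[simp]: "finite B \<Longrightarrow> finite (star x B)"
  unfolding star_def by simp

lemma card_Leaf[simp]: "card (Leaf ` A) = card A"
  by (rule card_image) (auto simp: inj_on_def)

lemma filter_Un: "{e \<in> A \<union> B. P e} = {e\<in>A. P e} \<union> {e\<in>B. P e}" by auto

lemma filter_star_leaf[simp]:
  "{e\<in>star x B. Leaf i \<in> e} = (if i \<in> B then {{Leaf i, Inner x}} else {})"
  unfolding star_def by (auto simp: doubleton_eq_iff)

lemma filter_star_inner[simp]:
  "{e\<in>star x B. Inner u \<in> e} = (if u = x then star x B else {})"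
  unfolding star_def by auto

lemma Union_star[simp]: "B \<noteq> {} \<Longrightarrow> \<Union>(star x B) = Leaf ` B \<union> {Inner x}"
  unfolding star_def by auto

lemma Union_star': "\<Union>(star x B) \<subseteq> Leaf ` B \<union> {Inner x}"
  unfolding star_def by auto

lemma doubleton_notin_star[simp]: "{Inner a, Inner b} \<notin> star x B"
  unfolding star_def by (auto simp: doubleton_eq_iff)

lemma star_disj[simp]: "B \<inter> C = {} \<Longrightarrow> star x B \<inter> star y C = {}"
  unfolding star_def by (auto simp: doubleton_eq_iff)

lemma conn_root:
  assumes r: "r \<in> \<Union>E" and h: "\<forall>z\<in>\<Union>E. (r, z) \<in> (adj E)\<^sup>*"
  shows "connected_on E (\<Union>E)"
proof -
  have eq: "adj E \<inter> (\<Union>E \<times> \<Union>E) = adj E" unfolding adj_def by auto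
  have sym: "sym ((adj E)\<^sup>*)" by (rule sym_rtrancl) (auto simp: sym_def adj_iff insert_commute)
  show ?thesis unfolding connected_on_def eq
  proof (intro ballI)
    fix p q assume "p \<in> \<Union>E" "q \<in> \<Union>E"
    then have "(r,p) \<in> (adj E)\<^sup>*" "(r,q) \<in> (adj E)\<^sup>*" using h by auto
    then have "(p,r) \<in> (adj E)\<^sup>*" using sym by (meson symD)
    then show "(p,q) \<in> (adj E)\<^sup>*" using \<open>(r,q) \<in> _\<close> by simp
  qed
qed

lemma conn_single: "connected_on E {p}"
  unfolding connected_on_def by auto

lemma conn_pair: "{p, q} \<in> E \<Longrightarrow> connected_on E {p, q}"
  unfolding connected_on_def
  by (auto simp: adj_iff insert_commute intro!: r_into_rtrancl)

lemma tree2_stable: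
  assumes xy: "x \<noteq> y" and BC: "B \<inter> C = {}" "B \<union> C = {1..n}"
    and cB: "2 \<le> card B" and cC: "2 \<le> card C"
  shows "stable_tree n (tree2 B C x y)" "inner (tree2 B C x y) = {x, y}"
    "{i. {Leaf i, Inner x} \<in> tree2 B C x y} = B" "card (tree2 B C x y) = n + 1"
proof -
  let ?E = "tree2 B C x y"
  have fB: "finite B" "finite C" using BC by (metis finite_Un finite_atLeastAtMost)+
  have ne: "B \<noteq> {}" "C \<noteq> {}" using cB cC by auto
  have UE: "\<Union>?E = Leaf ` {1..n} \<union> {Inner x, Inner y}"
    unfolding tree2_def using ne BC(2)[symmetric] by auto
  show inn: "inner ?E = {x, y}" unfolding inner_def UE by auto
  show "{i. {Leaf i, Inner x} \<in> ?E} = B"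
    unfolding tree2_def using BC xy by (auto simp: mem_star doubleton_eq_iff)
  show cardE: "card ?E = n + 1"
  proof -
    have "card ?E = card (star x B \<union> star y C) + 1"
      unfolding tree2_def using fB by (subst card_Un_disjoint) auto
    also have "card (star x B \<union> star y C) = card B + card C"
      using fB BC by (subst card_Un_disjoint) auto
    also have "card B + card C = n" using BC fB by (metis card_Un_disjoint card_atLeastAtMost diff_Suc_1)
    finally show ?thesis .
  qed
  have cardU: "card (\<Union>?E) = n + 2"
    unfolding UE using xy by (subst card_Un_disjoint) auto
  have conn: "connected_on ?E (\<Union>?E)"
  proof (rule conn_root[of "Inner x"])
    show "Inner x \<in> \<Union>?E" unfolding UE by auto
    have xy': "(Inner x, Inner y) \<in> adj ?E" unfolding adj_iff tree2_def by auto
    show "\<forall>z\<in>\<Union>?E. (Inner x, z) \<in> (adj ?E)\<^sup>*"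
    proof
      fix z assume "z \<in> \<Union>?E"
      then consider (L) i where "i \<in> B" "z = Leaf i" | (R) i where "i \<in> C" "z = Leaf i"
        | "z = Inner x" | "z = Inner y" unfolding UE using BC(2) by auto
      then show "(Inner x, z) \<in> (adj ?E)\<^sup>*"
      proof cases
        case L
        then have "(Inner x, z) \<in> adj ?E" unfolding adj_iff tree2_def by auto
        then show ?thesis by auto
      next
        case R
        then have "(Inner y, z) \<in> adj ?E" unfolding adj_iff tree2_def by auto
        then show ?thesis using xy' by (meson converse_rtrancl_into_rtrancl r_into_rtrancl)
      qed (use xy' in auto)
    qed
  qed
  have tree: "is_tree ?E"
    unfolding is_tree_def using cardE cardU conn fB xy
    by (auto simp: tree2_def mem_star)
  have leaves: "{i. Leaf i \<in> \<Union>?E} = {1..n}" unfolding UE by auto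
  have dL: "deg ?E (Leaf i) = 1" if "i \<in> {1..n}" for i
    using that BC unfolding deg_def tree2_def filter_Un by auto
  have dI: "deg ?E (Inner v) \<ge> 3" if "v \<in> inner ?E" for v
  proof -
    from that inn have "v = x \<or> v = y" by auto
    then show ?thesis
    proof
      assume v: "v = x"
      have "{e \<in> ?E. Inner v \<in> e} = insert {Inner x, Inner y} (star x B)"
        unfolding tree2_def filter_Un using v xy by auto
      then show ?thesis using fB cB unfolding deg_def by simp
    next
      assume v: "v = y"
      have "{e \<in> ?E. Inner v \<in> e} = insert {Inner x, Inner y} (star y C)"
        unfolding tree2_def filter_Un using v xy by auto
      then show ?thesis using fB cC unfolding deg_def by simp
    qed
  qed
  show "stable_tree n ?E" unfolding stable_tree_def using tree leaves dL dI by auto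
qed

lemma tree3_stable:
  assumes abc: "a \<noteq> b" "b \<noteq> c" "a \<noteq> c"
    and D: "A \<inter> M = {}" "A \<inter> C = {}" "M \<inter> C = {}" "A \<union> M \<union> C = {1..n}"
    and cA: "2 \<le> card A" and cM: "M \<noteq> {}" and cC: "2 \<le> card C"
  shows "stable_tree n (tree3 A M C a b c)" "inner (tree3 A M C a b c) = {a, b, c}"
proof -
  let ?E = "tree3 A M C a b c"
  have fB: "finite A" "finite M" "finite C" using D by (metis finite_Un finite_atLeastAtMost)+
  have ne: "A \<noteq> {}" "C \<noteq> {}" using cA cC by auto
  have UE: "\<Union>?E = Leaf ` {1..n} \<union> {Inner a, Inner b, Inner c}"
    unfolding tree3_def using ne cM D(4)[symmetric] by auto
  show inn: "inner ?E = {a, b, c}" unfolding inner_def UE by auto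
  have cardE: "card ?E = n + 2"
  proof -
    have "card ?E = card (star a A \<union> star b M \<union> star c C) + 2"
      unfolding tree3_def using fB abc by (subst card_Un_disjoint) (auto simp: doubleton_eq_iff)
    also have "card (star a A \<union> star b M \<union> star c C) = card A + card M + card C"
      proof -
      have "card (star a A \<union> star b M \<union> star c C) = card (star a A \<union> star b M) + card (star c C)"
        using fB D abc by (intro card_Un_disjoint) (auto simp: mem_star doubleton_eq_iff)
      moreover have "card (star a A \<union> star b M) = card (star a A) + card (star b M)"
        using fB D by (intro card_Un_disjoint) (auto simp: mem_star doubleton_eq_iff)
      ultimately show ?thesis by simp
    qed
    also have "card A + card M + card C = n"
    proof -
      have "card (A \<union> M \<union> C) = card (A \<union> M) + card C" using D fB by (intro card_Un_disjoint) auto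
      moreover have "card (A \<union> M) = card A + card M" using D fB by (intro card_Un_disjoint) auto
      ultimately show ?thesis using D(4) by simp
    qed
    finally show ?thesis .
  qed
  have cardU: "card (\<Union>?E) = n + 3"
    unfolding UE using abc by (subst card_Un_disjoint) auto
  have ab: "(Inner a, Inner b) \<in> adj ?E" unfolding adj_iff tree3_def by auto
  have bc: "(Inner b, Inner c) \<in> adj ?E" unfolding adj_iff tree3_def by auto
  have conn: "connected_on ?E (\<Union>?E)"
  proof (rule conn_root[of "Inner a"])
    show "Inner a \<in> \<Union>?E" unfolding UE by auto
    show "\<forall>z\<in>\<Union>?E. (Inner a, z) \<in> (adj ?E)\<^sup>*"
    proof
      fix z assume "z \<in> \<Union>?E"
      then consider (L) i where "i \<in> A" "z = Leaf i" | (R) i where "i \<in> M" "z = Leaf i"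
        | (S) i where "i \<in> C" "z = Leaf i"
        | "z = Inner a" | "z = Inner b" | "z = Inner c" unfolding UE using D(4) by auto
      then show "(Inner a, z) \<in> (adj ?E)\<^sup>*"
      proof cases
        case L
        then have "(Inner a, z) \<in> adj ?E" unfolding adj_iff tree3_def by auto
        then show ?thesis by auto
      next
        case R
        then have "(Inner b, z) \<in> adj ?E" unfolding adj_iff tree3_def by auto
        then show ?thesis using ab by (meson converse_rtrancl_into_rtrancl r_into_rtrancl)
      next
        case S
        then have "(Inner c, z) \<in> adj ?E" unfolding adj_iff tree3_def by auto
        then show ?thesis using ab bc by (meson converse_rtrancl_into_rtrancl r_into_rtrancl)
      next
        case 4 then show ?thesis by simp
      next
        case 5 then show ?thesis using ab by auto
      next
        case 6 then show ?thesis using ab bc by (meson rtrancl_into_rtrancl r_into_rtrancl)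
      qed
    qed
  qed
  have c2: "\<forall>e\<in>?E. card e = 2" using abc unfolding tree3_def by (auto simp: mem_star)
  have tree: "is_tree ?E"
    unfolding is_tree_def using cardE cardU conn fB c2
    by (simp add: tree3_def)
  have leaves: "{i. Leaf i \<in> \<Union>?E} = {1..n}" unfolding UE by auto
  have dL: "deg ?E (Leaf i) = 1" if "i \<in> {1..n}" for i
    using that D unfolding deg_def tree3_def filter_Un by auto
  have dI: "deg ?E (Inner v) \<ge> 3" if "v \<in> inner ?E" for v
  proof -
    from that inn have "v = a \<or> v = b \<or> v = c" by auto
    then show ?thesis
    proof (elim disjE)
      assume v: "v = a"
      have "{e \<in> ?E. Inner v \<in> e} = insert {Inner a, Inner b} (star a A)"
        unfolding tree3_def filter_Un using v abc by auto
      then show ?thesis using fB cA unfolding deg_def by simp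
    next
      assume v: "v = b"
      obtain m where m: "m \<in> M" using cM by auto
      have "{e \<in> ?E. Inner v \<in> e} = insert {Inner a, Inner b} (insert {Inner b, Inner c} (star b M))"
        unfolding tree3_def filter_Un using v abc by auto
      moreover have "{Inner a, Inner b} \<noteq> {Inner b, Inner c}" using abc by (auto simp: doubleton_eq_iff)
      moreover have "card M \<ge> 1" using cM fB by (simp add: Suc_leI card_gt_0_iff)
      ultimately show ?thesis using fB unfolding deg_def by simp
    next
      assume v: "v = c"
      have "{e \<in> ?E. Inner v \<in> e} = insert {Inner b, Inner c} (star c C)"
        unfolding tree3_def filter_Un using v abc by auto
      then show ?thesis using fB cC unfolding deg_def by simp
    qed
  qed
  show "stable_tree n ?E" unfolding stable_tree_def using tree leaves dL dI by auto
qed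

lemma lift_pair[simp]: "lift \<pi> ` {p, q} = {lift \<pi> p, lift \<pi> q}" by simp

lemma contract31:
  assumes abc: "a \<noteq> b" "b \<noteq> c" "a \<noteq> c" and xy: "x \<noteq> y"
    and D: "A \<inter> M = {}" "A \<inter> C = {}" "M \<inter> C = {}" "A \<union> M \<union> C = {1..n}"
    and cA: "2 \<le> card A" and cM: "M \<noteq> {}" and cC: "2 \<le> card C"
    and B: "B = A \<union> M"
  shows "contracts n (tree3 A M C a b c) (tree2 B C x y) (\<lambda>u. if u = c then y else x)"
proof -
  let ?T = "tree3 A M C a b c" and ?\<pi> = "\<lambda>u. if u = c then y else x"
  have fB: "finite A" "finite M" "finite C" using D by (metis finite_Un finite_atLeastAtMost)+
  have cB: "2 \<le> card B" unfolding B using cA fB by (meson card_mono finite_UnI le_trans sup_ge1)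
  have st3: "stable_tree n ?T" "inner ?T = {a,b,c}" using tree3_stable[OF abc D cA cM cC] by auto
  have st2: "stable_tree n (tree2 B C x y)" "inner (tree2 B C x y) = {x, y}"
  proof -
    have "B \<inter> C = {}" "B \<union> C = {1..n}" using B D by auto
    from tree2_stable[OF xy this cB cC] show "stable_tree n (tree2 B C x y)" "inner (tree2 B C x y) = {x, y}" by auto
  qed
  have fib: "connected_on ?T (Inner ` {v \<in> inner ?T. ?\<pi> v = v'})" if "v' \<in> {x, y}" for v'
  proof -
    from that consider "v' = x" | "v' = y" by auto
    then show ?thesis
    proof cases
      case 1
      then have "Inner ` {v \<in> inner ?T. ?\<pi> v = v'} = {Inner a, Inner b}" using st3 abc xy by auto
      then show ?thesis by (simp add: conn_pair tree3_def)
    next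
      case 2
      then have "Inner ` {v \<in> inner ?T. ?\<pi> v = v'} = {Inner c}" using st3 abc xy by auto
      then show ?thesis by (simp add: conn_single)
    qed
  qed
  have edges: "tree2 B C x y = {lift ?\<pi> ` e | e. e \<in> ?T \<and> card (lift ?\<pi> ` e) = 2}"
  proof (rule set_eqI, rule iffI)
    fix e assume "e \<in> tree2 B C x y"
    then consider (L) i where "i \<in> A" "e = {Leaf i, Inner x}" | (R) i where "i \<in> M" "e = {Leaf i, Inner x}"
      | (S) i where "i \<in> C" "e = {Leaf i, Inner y}" | (I) "e = {Inner x, Inner y}"
      unfolding tree2_def B by (auto simp: mem_star)
    then show "e \<in> {lift ?\<pi> ` e | e. e \<in> ?T \<and> card (lift ?\<pi> ` e) = 2}"
    proof cases
      case L then show ?thesis using abc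
        by (intro CollectI exI[of _ "{Leaf i, Inner a}"]) (auto simp: tree3_def)
    next
      case R then show ?thesis using abc
        by (intro CollectI exI[of _ "{Leaf i, Inner b}"]) (auto simp: tree3_def)
    next
      case S then show ?thesis using abc
        by (intro CollectI exI[of _ "{Leaf i, Inner c}"]) (auto simp: tree3_def)
    next
      case I then show ?thesis using abc xy
        by (intro CollectI exI[of _ "{Inner b, Inner c}"]) (auto simp: tree3_def)
    qed
  next
    fix e assume "e \<in> {lift ?\<pi> ` e | e. e \<in> ?T \<and> card (lift ?\<pi> ` e) = 2}"
    then obtain e0 where e: "e = lift ?\<pi> ` e0" "e0 \<in> ?T" "card (lift ?\<pi> ` e0) = 2" by auto
    then show "e \<in> tree2 B C x y" using abc xy unfolding tree3_def tree2_def B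
      by (auto simp: mem_star)
  qed
  have img: "?\<pi> ` inner ?T = {x, y}" using st3(2) abc by auto
  show ?thesis unfolding contracts_def
    using st3(1) st2 fib img edges by (intro conjI) simp_all
qed

lemma tree3_sym: "tree3 A M C a b c = tree3 C M A c b a"
  unfolding tree3_def by (auto simp: insert_commute)

lemma tree2_sym: "tree2 A B x y = tree2 B A y x"
  unfolding tree2_def by (auto simp: insert_commute)

lemma contract32:
  assumes abc: "a \<noteq> b" "b \<noteq> c" "a \<noteq> c" and xy: "x \<noteq> y"
    and D: "A \<inter> M = {}" "A \<inter> C = {}" "M \<inter> C = {}" "A \<union> M \<union> C = {1..n}"
    and cA: "2 \<le> card A" and cM: "M \<noteq> {}" and cC: "2 \<le> card C"
    and B: "B = M \<union> C"
  shows "contracts n (tree3 A M C a b c) (tree2 A B x y) (\<lambda>u. if u = a then x else y)"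
proof -
  have "contracts n (tree3 C M A c b a) (tree2 B A y x) (\<lambda>u. if u = a then x else y)"
    by (rule contract31) (use abc xy D cA cM cC B in auto)
  then show ?thesis by (simp add: tree3_sym[of A] tree2_sym[of A])
qed

lemma contract22:
  assumes xy: "x \<noteq> y" and xy': "x' \<noteq> y'" and BC: "B \<inter> C = {}" "B \<union> C = {1..n}"
    and cB: "2 \<le> card B" and cC: "2 \<le> card C"
  shows "contracts n (tree2 B C x y) (tree2 B C x' y') (\<lambda>u. if u = x then x' else y')"
proof -
  let ?T = "tree2 B C x y" and ?\<pi> = "\<lambda>u. if u = x then x' else y'"
  note s1 = tree2_stable[OF xy BC cB cC] and s2 = tree2_stable[OF xy' BC cB cC]
  have fib: "connected_on ?T (Inner ` {v \<in> inner ?T. ?\<pi> v = v'})" if "v' \<in> {x', y'}" for v'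
  proof -
    from that consider "v' = x'" | "v' = y'" by auto
    then show ?thesis
    proof cases
      case 1
      then have "Inner ` {v \<in> inner ?T. ?\<pi> v = v'} = {Inner x}" using s1 xy xy' by auto
      then show ?thesis by (simp add: conn_single)
    next
      case 2
      then have "Inner ` {v \<in> inner ?T. ?\<pi> v = v'} = {Inner y}" using s1 xy xy' by auto
      then show ?thesis by (simp add: conn_single)
    qed
  qed
  have edges: "tree2 B C x' y' = {lift ?\<pi> ` e | e. e \<in> ?T \<and> card (lift ?\<pi> ` e) = 2}"
  proof (rule set_eqI, rule iffI)
    fix e assume "e \<in> tree2 B C x' y'"
    then consider (L) i where "i \<in> B" "e = {Leaf i, Inner x'}"
      | (S) i where "i \<in> C" "e = {Leaf i, Inner y'}" | (I) "e = {Inner x', Inner y'}"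
      unfolding tree2_def by (auto simp: mem_star)
    then show "e \<in> {lift ?\<pi> ` e | e. e \<in> ?T \<and> card (lift ?\<pi> ` e) = 2}"
    proof cases
      case L then show ?thesis using xy
        by (intro CollectI exI[of _ "{Leaf i, Inner x}"]) (auto simp: tree2_def)
    next
      case S then show ?thesis using xy
        by (intro CollectI exI[of _ "{Leaf i, Inner y}"]) (auto simp: tree2_def)
    next
      case I then show ?thesis using xy xy'
        by (intro CollectI exI[of _ "{Inner x, Inner y}"]) (auto simp: tree2_def)
    qed
  next
    fix e assume "e \<in> {lift ?\<pi> ` e | e. e \<in> ?T \<and> card (lift ?\<pi> ` e) = 2}"
    then obtain e0 where e: "e = lift ?\<pi> ` e0" "e0 \<in> ?T" "card (lift ?\<pi> ` e0) = 2" by auto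
    then show "e \<in> tree2 B C x' y'" using xy xy' unfolding tree2_def
      by (auto simp: mem_star)
  qed
  have img: "?\<pi> ` inner ?T = {x', y'}" using s1(2) xy by auto
  show ?thesis unfolding contracts_def
    using s1(1) s2(1) s2(2) fib img edges by (intro conjI) simp_all
qed

lemma double_count:
  assumes "finite E" "\<forall>e\<in>E. finite e"
  shows "(\<Sum>x\<in>\<Union>E. card {e\<in>E. x \<in> e}) = (\<Sum>e\<in>E. card e)"
proof -
  have fU: "finite (\<Union>E)" using assms by auto
  have "(\<Sum>x\<in>\<Union>E. card {e\<in>E. x \<in> e}) = (\<Sum>x\<in>\<Union>E. \<Sum>e\<in>E. if x \<in> e then 1 else 0)"
    using assms(1) by (simp add: sum.inter_filter[symmetric])
  also have "\<dots> = (\<Sum>e\<in>E. \<Sum>x\<in>\<Union>E. if x \<in> e then 1 else 0)" by (rule sum.swap)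
  also have "\<dots> = (\<Sum>e\<in>E. card {x\<in>\<Union>E. x \<in> e})"
    using fU by (simp add: sum.inter_filter[symmetric])
  also have "\<dots> = (\<Sum>e\<in>E. card e)"
    by (rule sum.cong) (auto intro: arg_cong[where f=card])
  finally show ?thesis .
qed

lemma structure2:
  assumes st: "stable_tree n E" and c2: "card (inner E) = 2" and v: "v \<in> inner E"
  shows "\<exists>w B C. w \<noteq> v \<and> E = tree2 B C v w \<and> B \<inter> C = {} \<and> B \<union> C = {1..n}
           \<and> 2 \<le> card B \<and> 2 \<le> card C \<and> {i. {Leaf i, Inner v} \<in> E} = B"
proof -
  obtain w where w: "inner E = {v, w}" "w \<noteq> v"
    using c2 v by (metis card_2_iff insert_commute insert_iff singletonD)
  have tr: "is_tree E" and lv: "{i. Leaf i \<in> \<Union>E} = {1..n}"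
    and dl: "\<forall>i\<in>{1..n}. deg E (Leaf i) = 1" and di: "\<forall>u\<in>inner E. deg E (Inner u) \<ge> 3"
    using st unfolding stable_tree_def by auto
  have fE: "finite E" and e2: "\<forall>e\<in>E. card e = 2" and cE: "card E + 1 = card (\<Union>E)"
    using tr unfolding is_tree_def by auto
  have fe: "\<forall>e\<in>E. finite e" using e2 by (metis card.infinite zero_neq_numeral)
  have V: "\<Union>E = Leaf ` {1..n} \<union> {Inner v, Inner w}"
  proof (rule set_eqI, rule iffI)
    fix z assume z: "z \<in> \<Union>E"
    show "z \<in> Leaf ` {1..n} \<union> {Inner v, Inner w}"
    proof (cases z)
      case (Leaf i) then show ?thesis using z lv by auto
    next
      case (Inner u) then have "u \<in> inner E" using z unfolding inner_def by auto
      then show ?thesis using w Inner by auto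
    qed
  next
    fix z assume "z \<in> Leaf ` {1..n} \<union> {Inner v, Inner w}"
    then show "z \<in> \<Union>E" using lv w unfolding inner_def by auto
  qed
  have cV: "card (\<Union>E) = n + 2" unfolding V using w by (subst card_Un_disjoint) auto
  have cE': "card E = n + 1" using cE cV by simp
  define dv where "dv = deg E (Inner v)"
  define dw where "dw = deg E (Inner w)"
  have sum: "(\<Sum>x\<in>\<Union>E. deg E x) = 2 * (n + 1)"
    using double_count[OF fE fe] e2 cE' unfolding deg_def by simp
  have "(\<Sum>x\<in>\<Union>E. deg E x) = (\<Sum>x\<in>Leaf ` {1..n}. deg E x) + (\<Sum>x\<in>{Inner v, Inner w}. deg E x)"
    unfolding V by (rule sum.union_disjoint) auto
  also have "(\<Sum>x\<in>Leaf ` {1..n}. deg E x) = (\<Sum>i\<in>{1..n}. deg E (Leaf i))"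
    by (rule sum.reindex_cong[of Leaf]) (auto simp: inj_on_def)
  also have "\<dots> = n" using dl by simp
  also have "(\<Sum>x\<in>{Inner v, Inner w}. deg E x) = dv + dw" using w unfolding dv_def dw_def by simp
  finally have dsum: "dv + dw = n + 2" using sum by simp
  define Bv where "Bv = {i. {Leaf i, Inner v} \<in> E}"
  define Bw where "Bw = {i. {Leaf i, Inner w} \<in> E}"
  have Bsub: "Bv \<subseteq> {1..n}" "Bw \<subseteq> {1..n}" unfolding Bv_def Bw_def using lv by blast+
  have fB: "finite Bv" "finite Bw" using Bsub finite_subset by blast+
  have disj: "Bv \<inter> Bw = {}"
  proof (rule ccontr)
    assume "Bv \<inter> Bw \<noteq> {}"
    then obtain i where i: "i \<in> Bv" "i \<in> Bw" by auto
    then have "{{Leaf i, Inner v}, {Leaf i, Inner w}} \<subseteq> {e\<in>E. Leaf i \<in> e}"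
      unfolding Bv_def Bw_def by auto
    then have "card {{Leaf i, Inner v}, {Leaf i, Inner w}} \<le> deg E (Leaf i)"
      unfolding deg_def using fE by (intro card_mono) auto
    moreover have "card {{Leaf i, Inner v}, {Leaf i, Inner w}} = 2" using w by (auto simp: doubleton_eq_iff)
    moreover have "deg E (Leaf i) = 1" using dl i Bsub by auto
    ultimately show False by simp
  qed
  have incl: "{e\<in>E. Inner u \<in> e} \<subseteq> (if {Inner v, Inner w} \<in> E then insert {Inner v, Inner w} (star u (if u = v then Bv else Bw)) else star u (if u = v then Bv else Bw))"
    if u: "u = v \<or> u = w" for u
  proof
    fix e assume e: "e \<in> {e\<in>E. Inner u \<in> e}"
    then have "card e = 2" using e2 by auto
    then obtain z where ez: "e = {Inner u, z}" "z \<noteq> Inner u" using e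
      by (metis (no_types, lifting) card_2_iff insertE insert_commute mem_Collect_eq singletonD)
    have "z \<in> \<Union>E" using e ez by auto
    then consider (L) i where "z = Leaf i" | (I) "z = Inner v" | (J) "z = Inner w" unfolding V by auto
    then show "e \<in> (if {Inner v, Inner w} \<in> E then insert {Inner v, Inner w} (star u (if u = v then Bv else Bw)) else star u (if u = v then Bv else Bw))"
    proof cases
      case L
      then have "i \<in> (if u = v then Bv else Bw)" using e ez u unfolding Bv_def Bw_def
        by (auto simp: insert_commute)
      then show ?thesis using ez L by (auto simp: insert_commute)
    next
      case I then show ?thesis using ez e u w by (auto simp: insert_commute)
    next
      case J then show ?thesis using ez e u w by (auto simp: insert_commute)
    qed
  qed
  have dvle: "dv \<le> card Bv + (if {Inner v, Inner w} \<in> E then 1 else 0)"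
  proof -
    have "dv \<le> card (if {Inner v, Inner w} \<in> E then insert {Inner v, Inner w} (star v Bv) else star v Bv)"
      unfolding dv_def deg_def using incl[of v] fB by (intro card_mono) auto
    also have "\<dots> \<le> card Bv + (if {Inner v, Inner w} \<in> E then 1 else 0)"
      using fB by (auto intro: card_insert_le_m1 simp: card_insert_if)
    finally show ?thesis .
  qed
  have dwle: "dw \<le> card Bw + (if {Inner v, Inner w} \<in> E then 1 else 0)"
  proof -
    have "dw \<le> card (if {Inner v, Inner w} \<in> E then insert {Inner v, Inner w} (star w Bw) else star w Bw)"
      unfolding dw_def deg_def using incl[of w] fB w(2) by (intro card_mono) auto
    also have "\<dots> \<le> card Bw + (if {Inner v, Inner w} \<in> E then 1 else 0)"
      using fB by (auto simp: card_insert_if)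
    finally show ?thesis .
  qed
  have cBB: "card Bv + card Bw = card (Bv \<union> Bw)" using fB disj by (simp add: card_Un_disjoint)
  have "card (Bv \<union> Bw) \<le> n" using Bsub by (metis card_atLeastAtMost card_mono diff_Suc_1 finite_atLeastAtMost le_sup_iff)
  then have vw: "{Inner v, Inner w} \<in> E" and cU: "card (Bv \<union> Bw) = n"
    using dvle dwle dsum cBB by (auto split: if_splits)
  have BU: "Bv \<union> Bw = {1..n}" using cU Bsub by (intro card_subset_eq) auto
  have cBv: "2 \<le> card Bv" using dvle vw di w unfolding dv_def by force
  have cBw: "2 \<le> card Bw" using dwle vw di w unfolding dw_def by force
  have sub: "tree2 Bv Bw v w \<subseteq> E" unfolding tree2_def Bv_def Bw_def star_def using vw by auto
  have eq: "tree2 Bv Bw v w = E"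
    using tree2_stable(4)[OF w(2)[symmetric] disj BU cBv cBw] cE' sub fE by (intro card_subset_eq) auto
  show ?thesis using w(2) eq disj BU cBv cBw Bv_def by blast
qed

theorem lemma7p6:
  fixes n :: nat and Z :: "node set set \<Rightarrow> nat set"
  assumes "extremal_assignment n Z"
  shows "contraction_indicator n
           {B. \<exists>E v. stable_tree n E \<and> card (inner E) = 2 \<and> v \<in> Z E
                    \<and> B = {i. {Leaf i, Inner v} \<in> E}}"
proof -
  define CC where "CC = {B. \<exists>E v. stable_tree n E \<and> card (inner E) = 2 \<and> v \<in> Z E
                    \<and> B = {i. {Leaf i, Inner v} \<in> E}}"
  have Zsub: "Z E \<subseteq> inner E" "Z E \<noteq> inner E" if "stable_tree n E" for E
    using assms that unfolding extremal_assignment_def by auto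
  have Zc: "v' \<in> Z E' \<longleftrightarrow> (\<forall>v\<in>inner E. \<pi> v = v' \<longrightarrow> v \<in> Z E)"
    if "contracts n E E' \<pi>" "v' \<in> inner E'" for E E' \<pi> v'
    using assms that unfolding extremal_assignment_def by blast
  have memC: "\<exists>v w C. w \<noteq> v \<and> B \<inter> C = {} \<and> B \<union> C = {1..n} \<and> 2 \<le> card B \<and> 2 \<le> card C
      \<and> v \<in> Z (tree2 B C v w)" if "B \<in> CC" for B
  proof -
    from that obtain E v where E: "stable_tree n E" "card (inner E) = 2" "v \<in> Z E"
      "B = {i. {Leaf i, Inner v} \<in> E}" unfolding CC_def by auto
    have "v \<in> inner E" using Zsub[OF E(1)] E(3) by auto
    from structure2[OF E(1,2) this] obtain w B' C where
      "w \<noteq> v" "E = tree2 B' C v w" "B' \<inter> C = {}" "B' \<union> C = {1..n}" "2 \<le> card B'" "2 \<le> card C"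
      "{i. {Leaf i, Inner v} \<in> E} = B'" by blast
    then show ?thesis using E by metis
  qed
  have introC: "B \<in> CC" if "x \<noteq> y" "B \<inter> C = {}" "B \<union> C = {1..n}" "2 \<le> card B" "2 \<le> card C"
    "x \<in> Z (tree2 B C x y)" for x y B C
  proof -
    note s = tree2_stable[OF that(1-5)]
    show ?thesis unfolding CC_def using s that(1,6) by (intro CollectI exI[of _ "tree2 B C x y"] exI[of _ x]) auto
  qed
  have P1: "B \<subseteq> {1..n} \<and> 2 \<le> card B \<and> card B \<le> n - 2" if BC: "B \<in> CC" for B
  proof -
    obtain v w C where h: "w \<noteq> v" "B \<inter> C = {}" "B \<union> C = {1..n}" "2 \<le> card B" "2 \<le> card C"
      "v \<in> Z (tree2 B C v w)" using memC[OF BC] by iprover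
    have "finite B" "finite C" using h(3) by (metis finite_Un finite_atLeastAtMost)+
    then have "card B + card C = n" using h(2,3) by (metis card_Un_disjoint card_atLeastAtMost diff_Suc_1)
    then show ?thesis using h by auto
  qed
  have P2: "B' \<in> CC" if H: "B \<in> CC" "B' \<subseteq> B" "2 \<le> card B'" for B B'
  proof (cases "B' = B")
    case True then show ?thesis using that by simp
  next
    case False
    obtain v w C where h: "w \<noteq> v" "B \<inter> C = {}" "B \<union> C = {1..n}" "2 \<le> card B" "2 \<le> card C"
      "v \<in> Z (tree2 B C v w)" using memC[OF H(1)] by iprover
    let ?M = "B - B'"
    have D: "B' \<inter> ?M = {}" "B' \<inter> C = {}" "?M \<inter> C = {}" "B' \<union> ?M \<union> C = {1..n}"
      using h that by auto
    have M: "?M \<noteq> {}" using False that by auto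
    let ?T = "tree3 B' ?M C 0 1 2"
    have st3: "stable_tree n ?T" "inner ?T = {0,1,2}" using tree3_stable[OF _ _ _ D that(3) M h(5)] by auto
    have c1: "contracts n ?T (tree2 B C v w) (\<lambda>u. if u = 2 then w else v)"
      by (rule contract31) (use D H M h in auto)
    have v_in: "v \<in> inner (tree2 B C v w)" using tree2_stable(2)[OF h(1)[symmetric] h(2-5)] by auto
    have "0 \<in> Z ?T" using Zc[OF c1 v_in] h(6) st3(2) by auto
    have c2: "contracts n ?T (tree2 B' (?M \<union> C) 0 1) (\<lambda>u. if u = 0 then 0 else 1)"
      by (rule contract32) (use D that M h in auto)
    have cMC: "2 \<le> card (?M \<union> C)"
    proof -
      have "finite (?M \<union> C)" using D(4) by (metis finite_Un finite_atLeastAtMost)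
      then show ?thesis using h(5) by (meson card_mono le_trans sup_ge2)
    qed
    have D2: "B' \<inter> (?M \<union> C) = {}" "B' \<union> (?M \<union> C) = {1..n}" using D by auto
    have z_in: "0 \<in> inner (tree2 B' (?M \<union> C) 0 1)" using tree2_stable(2)[OF _ D2 that(3) cMC] by auto
    have "0 \<in> Z (tree2 B' (?M \<union> C) 0 1)" using Zc[OF c2 z_in] \<open>0 \<in> Z ?T\<close> st3(2) by auto
    then show ?thesis using introC[OF _ D2 that(3) cMC] by auto
  qed
  have P3: "B1 \<union> B2 \<noteq> {1..n}" if H: "B1 \<in> CC" "B2 \<in> CC" for B1 B2
  proof
    assume U: "B1 \<union> B2 = {1..n}"
    obtain v1 w1 C1 where h1: "w1 \<noteq> v1" "B1 \<inter> C1 = {}" "B1 \<union> C1 = {1..n}" "2 \<le> card B1" "2 \<le> card C1"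
      "v1 \<in> Z (tree2 B1 C1 v1 w1)" using memC[OF H(1)] by iprover
    obtain v2 w2 C2 where h2: "w2 \<noteq> v2" "B2 \<inter> C2 = {}" "B2 \<union> C2 = {1..n}" "2 \<le> card B2" "2 \<le> card C2"
      "v2 \<in> Z (tree2 B2 C2 v2 w2)" using memC[OF H(2)] by iprover
    note s2 = tree2_stable[OF h2(1)[symmetric] h2(2-5)]
    show False
    proof (cases "C1 = B2")
      case True
      then have B1C2: "B1 = C2" using h1 h2 by blast
      have E2: "tree2 B2 C2 v2 w2 = tree2 B1 C1 w2 v2" using True B1C2 tree2_sym by metis
      have c: "contracts n (tree2 B1 C1 v1 w1) (tree2 B1 C1 w2 v2) (\<lambda>u. if u = v1 then w2 else v2)"
        by (rule contract22) (use h1 h2 in auto)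
      have w2in: "w2 \<in> inner (tree2 B1 C1 w2 v2)" using s2(2) E2 by auto
      have "w2 \<in> Z (tree2 B1 C1 w2 v2)"
        using Zc[OF c w2in] h1(6) tree2_stable(2)[OF h1(1)[symmetric] h1(2-5)] h1(1) h2(1) by auto
      then have "{v2, w2} \<subseteq> Z (tree2 B2 C2 v2 w2)" using h2(6) E2 by auto
      then show False using Zsub[OF s2(1)] s2(2) by auto
    next
      case False
      let ?M = "B1 \<inter> B2"
      have D: "C2 \<inter> ?M = {}" "C2 \<inter> C1 = {}" "?M \<inter> C1 = {}" "C2 \<union> ?M \<union> C1 = {1..n}"
        using h1 h2 U by blast+
      have sub: "C1 \<subseteq> B2" using h1 U by blast
      have M: "?M \<noteq> {}" using False sub h1 U by blast
      let ?T = "tree3 C2 ?M C1 0 1 2"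
      have st3: "stable_tree n ?T" "inner ?T = {0,1,2}" using tree3_stable[OF _ _ _ D h2(5) M h1(5)] by auto
      have c1: "contracts n ?T (tree2 B1 C1 v1 w1) (\<lambda>u. if u = 2 then w1 else v1)"
        by (rule contract31) (use D h1 h2 M U in auto)
      have v1_in: "v1 \<in> inner (tree2 B1 C1 v1 w1)" using tree2_stable(2)[OF h1(1)[symmetric] h1(2-5)] by auto
      have z01: "0 \<in> Z ?T" "1 \<in> Z ?T" using Zc[OF c1 v1_in] h1(6) st3(2) by auto
      have E2: "tree2 B2 C2 v2 w2 = tree2 C2 B2 w2 v2" using tree2_sym by metis
      have c2: "contracts n ?T (tree2 C2 B2 w2 v2) (\<lambda>u. if u = 0 then w2 else v2)"
        by (rule contract32) (use D h1 h2 M U in auto)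
      have v2_in: "v2 \<in> inner (tree2 C2 B2 w2 v2)" using s2(2) E2 by auto
      have "2 \<in> Z ?T" using Zc[OF c2 v2_in] h2(6) E2 st3(2) h2(1) by auto
      then have "inner ?T \<subseteq> Z ?T" using z01 st3(2) by auto
      then show False using Zsub[OF st3(1)] by auto
    qed
  qed
  show ?thesis unfolding contraction_indicator_def CC_def[symmetric] using P1 P2 P3 by blast
qed

end
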